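(* Let $p$ be a prime. If $I$ is a Hopf ideal of $\mathcal A_{p*}$ contained in $I_p^{\langle0\rangle}$ such that $\mathcal A_{p*}/I$ is a cocommutative Hopf algebra, then $I=I_p^{\langle0\rangle}$. Similarly, for $k\ge1$, if $I$ is a Hopf ideal of $\mathcal A_p\langle k\rangle_*$ contained in $I_p^{\langle k\rangle}$ such that $\mathcal A_p\langle k\rangle_*/I$ is cocommutative, then $I=I_p^{\langle k\rangle}$.
   Context: Dual Steenrod algebra: $\mathcal A_{2*}=\mathbb F_2[\zeta_1,\zeta_2,\dots]$ ($\deg\zeta_i=2^i-1$); for odd $p$, $\mathcal A_{p*}=E(\tau_0,\tau_1,\dots)\otimes\mathbb F_p[\xi_1,\xi_2,\dots]$ ($\deg\tau_i=2p^i-1$, $\deg\xi_i=2(p^i-1)$), a graded commutative Hopf algebra with coproduct (with $\zeta_0=\xi_0=1$) $\mu(\zeta_n)=\sum_{k=0}^n\zeta_{n-k}^{2^k}\otimes\zeta_k$, $\mu(\xi_n)=\sum_{k=0}^n\xi_{n-k}^{p^k}\otimes\xi_k$, $\mu(\tau_n)=\sum_{k=0}^n\xi_{n-k}^{p^k}\otimes\tau_k+\tau_n\otimes1$. Cocommutativity is with respect to the graded switching map $x\otimes y\mapsto(-1)^{\deg x\deg y}y\otimes x$. For $k\ge1$, $\mathcal A_p\langle k\rangle_*$ is the Hopf subalgebra $\mathbb F_2[\zeta_i^{2^k}:i\ge1]$ ($p=2$), $E(\tau_0)\otimes\mathbb F_p[\xi_i^p:i\ge1]$ ($p$ odd, $k=1$),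 $\mathbb F_p[\xi_i^{p^k}:i\ge1]$ ($p$ odd, $k\ge2$); $\mathcal A_p\langle0\rangle_*=\mathcal A_{p*}$. $I_p^{\langle k\rangle}\subset\mathcal A_p\langle k\rangle_*$ is the ideal generated by all $\zeta_n^{2^{k+1}}$, $n\ge1$ ($p=2$); by $\tau_0$ and all $\xi_n^p$ ($p$ odd, $k=0$); by all $\xi_n^{p^{k+1}}$ ($p$ odd, $k\ge1$). *)

theory Defs
  imports Main "HOL-Computational_Algebra.Primes"
begin

text \<open>A monomial is a pair (E, R): E is the finite set of indices i of the exterior
generators tau_i occurring (always empty for p = 2), R i is the exponent of the
polynomial generator with index i >= 1 (zeta_i for p = 2, xi_i for p odd); R 0 = 0.
The monomial (E,R) stands for tau_{e_1} ... tau_{e_r} * prod_i x_i^{R i} with e_1 < ... < e_r.\<close>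

type_synonym mono = "nat set \<times> (nat \<Rightarrow> nat)"

text \<open>Elements are finitely supported coefficient functions (F_p-linear combinations of monomials);
tensors in A (x) A are finitely supported coefficient functions on pairs of monomials.\<close>
type_synonym 'k elt = "mono \<Rightarrow> 'k"
type_synonym 'k tens = "mono \<times> mono \<Rightarrow> 'k"

definition valid_mono :: "nat \<Rightarrow> mono \<Rightarrow> bool" where
  "valid_mono p m \<longleftrightarrow> finite (fst m) \<and> finite {i. snd m i \<noteq> 0} \<and> snd m 0 = 0
      \<and> (p = 2 \<longrightarrow> fst m = {})"

definition supp :: "('a \<Rightarrow> 'k::zero) \<Rightarrow> 'a set" where
  "supp f = {x. f x \<noteq> 0}"

definition valid_elt :: "nat \<Rightarrow> 'k::zero elt \<Rightarrow> bool" where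
  "valid_elt p f \<longleftrightarrow> finite (supp f) \<and> (\<forall>m. f m \<noteq> 0 \<longrightarrow> valid_mono p m)"

definition gdeg :: "nat \<Rightarrow> nat \<Rightarrow> nat" where
  "gdeg p i = (if p = 2 then 2 ^ i - 1 else 2 * (p ^ i - 1))"

definition mdeg :: "nat \<Rightarrow> mono \<Rightarrow> nat" where
  "mdeg p m = (\<Sum>e\<in>fst m. 2 * p ^ e - 1) + (\<Sum>i\<in>{i. snd m i \<noteq> 0}. snd m i * gdeg p i)"

definition unitmono :: mono where "unitmono = ({}, \<lambda>_. 0)"

text \<open>x_n^e (with x_0 = 1) and tau_n.\<close>
definition polymono :: "nat \<Rightarrow> nat \<Rightarrow> mono" where
  "polymono n e = ({}, \<lambda>j. if j = n \<and> n \<noteq> 0 then e else 0)"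

definition taumono :: "nat \<Rightarrow> mono" where
  "taumono n = ({n}, \<lambda>_. 0)"

definition bvec :: "mono \<Rightarrow> 'k::{zero,one} elt" where
  "bvec m = (\<lambda>x. if x = m then 1 else 0)"

definition tvec :: "mono \<Rightarrow> mono \<Rightarrow> 'k::{zero,one} tens" where
  "tvec a b = (\<lambda>x. if x = (a, b) then 1 else 0)"

text \<open>Multiplication of monomials: sign (0 if some tau_i would be squared) and result.
The sign comes from reordering the exterior generators, tau's anticommute.\<close>
definition msign :: "mono \<Rightarrow> mono \<Rightarrow> 'k::comm_ring_1" where
  "msign a b = (if fst a \<inter> fst b = {} then
      (- 1) ^ card {(e, f). e \<in> fst a \<and> f \<in> fst b \<and> f < e} else 0)"

definition mres :: "mono \<Rightarrow> mono \<Rightarrow> mono" where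
  "mres a b = (fst a \<union> fst b, \<lambda>i. snd a i + snd b i)"

definition mul :: "'k::comm_ring_1 elt \<Rightarrow> 'k elt \<Rightarrow> 'k elt" where
  "mul f g = (\<lambda>c. \<Sum>(a, b)\<in>supp f \<times> supp g.
      if mres a b = c then msign a b * f a * g b else 0)"

text \<open>The product of the graded tensor product algebra A (x) A:
(a (x) b)(c (x) d) = (-1)^{|b||c|} ac (x) bd.\<close>
definition tmul :: "nat \<Rightarrow> 'k::comm_ring_1 tens \<Rightarrow> 'k tens \<Rightarrow> 'k tens" where
  "tmul p t u = (\<lambda>(c1, c2). \<Sum>((a1, a2), (b1, b2))\<in>supp t \<times> supp u.
      if mres a1 b1 = c1 \<and> mres a2 b2 = c2
      then (- 1) ^ (mdeg p a2 * mdeg p b1) * msign a1 b1 * msign a2 b2 * t (a1, a2) * u (b1, b2)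
      else 0)"

definition tone :: "'k::{zero,one} tens" where "tone = tvec unitmono unitmono"

definition tadd :: "'k::plus tens \<Rightarrow> 'k tens \<Rightarrow> 'k tens" where
  "tadd t u = (\<lambda>x. t x + u x)"

primrec tpow :: "nat \<Rightarrow> 'k::comm_ring_1 tens \<Rightarrow> nat \<Rightarrow> 'k tens" where
  "tpow p t 0 = tone"
| "tpow p t (Suc n) = tmul p t (tpow p t n)"

text \<open>Coproduct of the polynomial generators:
mu(x_n) = sum_{k=0}^n x_{n-k}^{p^k} (x) x_k, and of the exterior generators:
mu(tau_n) = sum_{k=0}^n xi_{n-k}^{p^k} (x) tau_k + tau_n (x) 1.\<close>
definition comul_gen :: "nat \<Rightarrow> nat \<Rightarrow> 'k::comm_ring_1 tens" where
  "comul_gen p n = (\<lambda>x. \<Sum>k\<in>{0..n}. tvec (polymono (n - k) (p ^ k)) (polymono k 1) x)"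

definition comul_tau :: "nat \<Rightarrow> nat \<Rightarrow> 'k::comm_ring_1 tens" where
  "comul_tau p n = (\<lambda>x. tvec (taumono n) unitmono x
      + (\<Sum>k\<in>{0..n}. tvec (polymono (n - k) (p ^ k)) (taumono k) x))"

definition comul_mono :: "nat \<Rightarrow> mono \<Rightarrow> 'k::comm_ring_1 tens" where
  "comul_mono p m = tmul p
      (foldr (tmul p) (map (comul_tau p) (sorted_list_of_set (fst m))) tone)
      (foldr (tmul p) (map (\<lambda>i. tpow p (comul_gen p i) (snd m i))
           (sorted_list_of_set {i. snd m i \<noteq> 0})) tone)"

definition comul :: "nat \<Rightarrow> 'k::comm_ring_1 elt \<Rightarrow> 'k tens" where
  "comul p f = (\<lambda>x. \<Sum>m\<in>supp f. f m * comul_mono p m x)"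

definition counit :: "'k::zero elt \<Rightarrow> 'k" where
  "counit f = f unitmono"

definition tswap :: "nat \<Rightarrow> 'k::comm_ring_1 tens \<Rightarrow> 'k tens" where
  "tswap p t = (\<lambda>(m1, m2). (- 1) ^ (mdeg p m1 * mdeg p m2) * t (m2, m1))"

text \<open>Antipode: the convolution inverse of the identity, m o (chi (x) id) o mu = eta o epsilon,
determined on monomials and extended linearly.\<close>
definition antipode_mono :: "nat \<Rightarrow> mono \<Rightarrow> 'k::comm_ring_1 elt" where
  "antipode_mono p = (THE chi.
     (\<forall>m. \<not> valid_mono p m \<longrightarrow> chi m = (\<lambda>_. 0)) \<and>
     (\<forall>m. valid_mono p m \<longrightarrow> valid_elt p (chi m) \<and>
        (\<lambda>x. \<Sum>(a, b)\<in>supp (comul_mono p m :: 'k tens). comul_mono p m (a, b) * mul (chi a) (bvec b) x)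
        = (if m = unitmono then bvec unitmono else (\<lambda>_. 0))))"

definition antipode :: "nat \<Rightarrow> 'k::comm_ring_1 elt \<Rightarrow> 'k elt" where
  "antipode p f = (\<lambda>x. \<Sum>m\<in>supp f. f m * antipode_mono p m x)"

definition inAk_mono :: "nat \<Rightarrow> nat \<Rightarrow> mono \<Rightarrow> bool" where
  "inAk_mono p k m =
    (if k = 0 then True
     else if p = 2 then fst m = {} \<and> (\<forall>i. 2 ^ k dvd snd m i)
     else if k = 1 then fst m \<subseteq> {0} \<and> (\<forall>i. p dvd snd m i)
     else fst m = {} \<and> (\<forall>i. p ^ k dvd snd m i))"

definition Ak :: "nat \<Rightarrow> nat \<Rightarrow> 'k::zero elt set" where
  "Ak p k = {f. valid_elt p f \<and> (\<forall>m. f m \<noteq> 0 \<longrightarrow> inAk_mono p k m)}"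

definition sub_ideal :: "'k::comm_ring_1 elt set \<Rightarrow> 'k elt set \<Rightarrow> bool" where
  "sub_ideal B I \<longleftrightarrow> I \<subseteq> B \<and> (\<lambda>_. 0) \<in> I
     \<and> (\<forall>x\<in>I. \<forall>y\<in>I. (\<lambda>m. x m + y m) \<in> I)
     \<and> (\<forall>c x. x \<in> I \<longrightarrow> (\<lambda>m. c * x m) \<in> I)
     \<and> (\<forall>b\<in>B. \<forall>x\<in>I. mul b x \<in> I)"

definition homogeneous :: "nat \<Rightarrow> 'k::zero elt set \<Rightarrow> bool" where
  "homogeneous p I \<longleftrightarrow> (\<forall>x\<in>I. \<forall>n. (\<lambda>m. if mdeg p m = n then x m else 0) \<in> I)"

definition tensor :: "'k::times elt \<Rightarrow> 'k elt \<Rightarrow> 'k tens" where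
  "tensor a b = (\<lambda>(m1, m2). a m1 * b m2)"

text \<open>The subspace I (x) B + B (x) I of B (x) B (the kernel of B (x) B -> B/I (x) B/I).\<close>
definition tens_ideal :: "'k::comm_ring_1 elt set \<Rightarrow> 'k elt set \<Rightarrow> 'k tens set" where
  "tens_ideal B I = {t. \<exists>xs. set xs \<subseteq> (I \<times> B) \<union> (B \<times> I) \<and>
      t = (\<lambda>x. \<Sum>(a, b)\<leftarrow>xs. tensor a b x)}"

definition hopf_ideal :: "nat \<Rightarrow> 'k::comm_ring_1 elt set \<Rightarrow> 'k elt set \<Rightarrow> bool" where
  "hopf_ideal p B I \<longleftrightarrow> sub_ideal B I \<and> homogeneous p I
     \<and> (\<forall>x\<in>I. counit x = 0)
     \<and> (\<forall>x\<in>I. comul p x \<in> tens_ideal B I)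
     \<and> (\<forall>x\<in>I. antipode p x \<in> I)"

text \<open>B/I is cocommutative: (pi (x) pi)(T o mu - mu) = 0, i.e. T mu(x) - mu(x) lies in
ker(pi (x) pi) = I (x) B + B (x) I for all x in B.\<close>
definition quot_cocomm :: "nat \<Rightarrow> 'k::comm_ring_1 elt set \<Rightarrow> 'k elt set \<Rightarrow> bool" where
  "quot_cocomm p B I \<longleftrightarrow>
     (\<forall>x\<in>B. (\<lambda>y. tswap p (comul p x) y - comul p x y) \<in> tens_ideal B I)"

definition Igens :: "nat \<Rightarrow> nat \<Rightarrow> 'k::{zero,one} elt set" where
  "Igens p k =
    (if p = 2 then {bvec (polymono n (2 ^ (k + 1))) | n. n \<ge> 1}
     else if k = 0 then insert (bvec (taumono 0)) {bvec (polymono n p) | n. n \<ge> 1}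
     else {bvec (polymono n (p ^ (k + 1))) | n. n \<ge> 1})"

definition Ipk :: "nat \<Rightarrow> nat \<Rightarrow> 'k::comm_ring_1 elt set" where
  "Ipk p k = \<Inter> {J. sub_ideal (Ak p k) J \<and> Igens p k \<subseteq> J}"

end

theory Submission
  imports Defs "HOL-Number_Theory.Residues" "HOL-Library.Poly_Mapping" "HOL-Library.Function_Algebras" "HOL-Library.Product_Plus"
begin

type_synonym 'k PR = "((nat \<Rightarrow> nat) \<times> (nat \<Rightarrow> nat)) \<Rightarrow>\<^sub>0 'k"

lemma lookup_mult_fin:
  fixes f g :: "'a::monoid_add \<Rightarrow>\<^sub>0 'b::semiring_0"
  shows "Poly_Mapping.lookup (f * g) k = (\<Sum>(a, b)\<in>Poly_Mapping.keys f \<times> Poly_Mapping.keys g. if k = a + b then Poly_Mapping.lookup f a * Poly_Mapping.lookup g b else 0)"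
proof -
  have "Poly_Mapping.lookup (f * g) k = prod_fun (Poly_Mapping.lookup f) (Poly_Mapping.lookup g) k"
    by (simp add: times_poly_mapping.rep_eq)
  also have "\<dots> = (\<Sum>(a, b). Poly_Mapping.lookup f a * Poly_Mapping.lookup g b when k = a + b)"
    by (rule prod_fun_unfold_prod) auto
  also have "\<dots> = (\<Sum>(a, b)\<in>Poly_Mapping.keys f \<times> Poly_Mapping.keys g. Poly_Mapping.lookup f a * Poly_Mapping.lookup g b when k = a + b)"
    by (rule Sum_any.expand_superset) (auto simp: in_keys_iff)
  also have "\<dots> = (\<Sum>(a, b)\<in>Poly_Mapping.keys f \<times> Poly_Mapping.keys g. if k = a + b then Poly_Mapping.lookup f a * Poly_Mapping.lookup g b else 0)"
    by (simp add: when_def)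
  finally show ?thesis .
qed

definition emb :: "'k::comm_ring_1 PR \<Rightarrow> 'k tens" where
  "emb f = (\<lambda>(m1, m2). if fst m1 = {} \<and> fst m2 = {} then Poly_Mapping.lookup f (snd m1, snd m2) else 0)"

lemma supp_emb: "supp (emb f) = (\<lambda>(r1, r2). (({}, r1), ({}, r2))) ` Poly_Mapping.keys f"
proof (rule Set.set_eqI, rule iffI)
  fix x assume "x \<in> supp (emb f)"
  then obtain a r1 b r2 where x: "x = ((a, r1), (b, r2))" and "a = {}" "b = {}" "Poly_Mapping.lookup f (r1, r2) \<noteq> 0"
    by (cases x) (auto simp: supp_def emb_def split: if_splits)
  thus "x \<in> (\<lambda>(r1, r2). (({}, r1), ({}, r2))) ` Poly_Mapping.keys f"
    by (auto simp: in_keys_iff intro!: image_eqI[where x="(r1, r2)"])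
qed (auto simp: supp_def emb_def in_keys_iff)

lemma msign_empty: "msign ({}, r) ({}, s) = 1"
  by (simp add: msign_def)

lemma mres_empty: "mres ({}, r) ({}, s) = ({}, r + s)"
  by (simp add: mres_def plus_fun_def)

lemma mdeg_empty_even: "p \<noteq> 2 \<Longrightarrow> even (mdeg p ({}, r))"
  by (auto simp: mdeg_def gdeg_def intro!: dvd_sum)

lemma sign_empty:
  assumes "of_nat p = (0::'k::comm_ring_1)" "prime p"
  shows "(- 1 :: 'k) ^ (mdeg p ({}, r) * mdeg p ({}, s)) = 1"
proof (cases "p = 2")
  case True
  hence "(1::'k) + 1 = 0" using assms(1) by (metis one_add_one of_nat_1 of_nat_add)
  hence "(-1::'k) = 1" by (metis add_eq_0_iff)
  thus ?thesis by (metis power_one)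
next
  case False
  thus ?thesis by (metis even_mult_iff mdeg_empty_even[OF False] neg_one_even_power)
qed

lemma emb_mult:
  assumes "of_nat p = (0::'k::comm_ring_1)" "prime p"
  shows "emb (f * g :: 'k PR) = tmul p (emb f) (emb g)"
proof (rule ext, clarify)
  fix c1 c2 :: mono
  let ?h = "\<lambda>((r1, r2), (s1, s2)). ((({}, r1), ({}, r2)), (({}, s1), ({}, s2))) :: (mono \<times> mono) \<times> (mono \<times> mono)"
  have inj: "inj_on ?h (Poly_Mapping.keys f \<times> Poly_Mapping.keys g)" by (auto simp: inj_on_def)
  have S: "supp (emb f) \<times> supp (emb g) = ?h ` (Poly_Mapping.keys f \<times> Poly_Mapping.keys g)"
    by (auto simp: supp_emb) force
  have "tmul p (emb f) (emb g) (c1, c2) = (\<Sum>x\<in>Poly_Mapping.keys f \<times> Poly_Mapping.keys g. (\<lambda>((a1, a2), (b1, b2)). if mres a1 b1 = c1 \<and> mres a2 b2 = c2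
      then (- 1) ^ (mdeg p a2 * mdeg p b1) * msign a1 b1 * msign a2 b2 * emb f (a1, a2) * emb g (b1, b2)
      else 0) (?h x))"
    unfolding tmul_def S by (simp add: sum.reindex[OF inj] del: split_paired_all)
  also have "\<dots> = (\<Sum>x\<in>Poly_Mapping.keys f \<times> Poly_Mapping.keys g. (\<lambda>((r1, r2), (s1, s2)). if ({}, r1 + s1) = c1 \<and> ({}, r2 + s2) = c2
      then Poly_Mapping.lookup f (r1, r2) * Poly_Mapping.lookup g (s1, s2) else 0) x)"
    by (rule sum.cong) (auto simp: mres_empty msign_empty sign_empty[OF assms] emb_def)
  also have "\<dots> = emb (f * g) (c1, c2)"
  proof (cases "fst c1 = {} \<and> fst c2 = {}")
    case True
    then obtain r s where c: "c1 = ({}, r)" "c2 = ({}, s)" by (cases c1, cases c2) auto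
    show ?thesis unfolding c emb_def lookup_mult_fin by (auto intro!: sum.cong)
  next
    case False
    thus ?thesis by (auto simp: emb_def intro!: sum.neutral)
  qed
  finally show "emb (f * g) (c1, c2) = tmul p (emb f) (emb g) (c1, c2)" by simp
qed

lemma emb_add: "emb (f + g) = (\<lambda>x. emb f x + emb g x)"
  by (auto simp: emb_def lookup_add)

lemma emb_sum: "emb (sum F A) = (\<lambda>x. \<Sum>a\<in>A. emb (F a) x)"
proof (rule ext, clarify)
  fix a r b s
  show "emb (sum F A) ((a, r), (b, s)) = (\<Sum>x\<in>A. emb (F x) ((a, r), (b, s)))"
    by (cases "a = {}"; cases "b = {}") (simp_all add: emb_def lookup_sum)
qed

lemma emb_single: "emb (Poly_Mapping.single (r, s) 1) = tvec ({}, r) ({}, s)"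
  by (auto simp: emb_def tvec_def lookup_single when_def)

lemma emb_one: "emb 1 = tone"
  by (rule ext) (auto simp: emb_def tone_def tvec_def unitmono_def lookup_one when_def zero_fun_def zero_prod_def fun_eq_iff split: prod.splits)

lemma polymono_fst: "polymono m e = ({}, snd (polymono m e))"
  by (simp add: polymono_def)

lemma emb_tpow:
  assumes "of_nat p = (0::'k::comm_ring_1)" "prime p"
  shows "tpow p (emb (f :: 'k PR)) n = emb (f ^ n)"
  by (induction n) (simp_all add: emb_one emb_mult[OF assms])

lemma char_k:
  assumes "prime p" and "card (UNIV :: 'k::{field,finite} set) = p"
  shows "CHAR('k) = p"
proof -
  have "CHAR('k) dvd p" using CHAR_dvd_CARD[where 'a='k] assms(2) by simp
  moreover have "CHAR('k) > 0" by (rule finite_imp_CHAR_pos) simp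
  hence "prime CHAR('k)" by (rule prime_CHAR_semidom)
  ultimately show ?thesis using assms(1) by (simp add: primes_dvd_imp_eq)
qed


lemma char_PR: "CHAR('k::comm_ring_1 PR) = CHAR('k)"
proof (rule CHAR_eqI)
  show "of_nat CHAR('k) = (0::'k PR)"
    by (metis single_of_nat of_nat_CHAR single_zero)
  fix x assume "of_nat x = (0::'k PR)"
  hence "Poly_Mapping.lookup (of_nat x :: 'k PR) 0 = 0" by simp
  hence "(of_nat x :: 'k) = 0" by (simp add: lookup_of_nat)
  thus "CHAR('k) dvd x" by (simp add: of_nat_eq_0_iff_char_dvd)
qed

definition G :: "nat \<Rightarrow> nat \<Rightarrow> 'k::comm_ring_1 PR" where
  "G p n = (\<Sum>j\<in>{0..n}. Poly_Mapping.single (snd (polymono (n - j) (p ^ j)), snd (polymono j 1)) 1)"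

lemma comul_gen_emb: "comul_gen p n = emb (G p n)"
  unfolding G_def emb_sum emb_single comul_gen_def
  by (subst (1 2) polymono_fst) simp

lemma single_pow: "(Poly_Mapping.single (r, s) (1::'k::comm_ring_1)) ^ n
   = Poly_Mapping.single ((\<lambda>i. n * r i), (\<lambda>i. n * s i)) 1"
proof (induction n)
  case 0 thus ?case by (simp add: zero_fun_def zero_prod_def flip: single_one)
next
  case (Suc n) thus ?case by (simp add: mult_single plus_fun_def)
qed

lemma polymono_scale: "(\<lambda>i. q * snd (polymono m e) i) = snd (polymono m (q * e))"
  by (auto simp: polymono_def)

lemma G_pow:
  assumes "CHAR('k::comm_ring_1) = p" "prime p"
  shows "(G p n :: 'k PR) ^ (p ^ k) =
     (\<Sum>j\<in>{0..n}. Poly_Mapping.single (snd (polymono (n - j) (p ^ k * p ^ j)), snd (polymono j (p ^ k))) 1)"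
proof -
  have c: "CHAR('k PR) = p" using char_PR[where 'k='k] assms(1) by simp
  show ?thesis unfolding G_def
    by (subst freshmans_dream_sum'[where n=k]) (simp_all add: c assms single_pow polymono_scale)
qed

lemma supp_bvec: "supp (bvec m :: 'k::zero_neq_one elt) = {m}"
  by (auto simp: supp_def bvec_def)

lemma comul_bvec: "comul p (bvec m :: 'k::comm_ring_1 elt) = comul_mono p m"
  unfolding comul_def supp_bvec by (simp add: bvec_def)

lemma comul_mono_poly:
  assumes "q > 0"
  shows "comul_mono p (polymono (Suc n) q) = tmul p tone (tmul p (tpow p (comul_gen p (Suc n)) q) tone :: 'k::comm_ring_1 tens)"
proof -
  have "{i. snd (polymono (Suc n) q) i \<noteq> 0} = {Suc n}" using assms by (auto simp: polymono_def)
  thus ?thesis by (simp add: comul_mono_def polymono_def)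
qed

definition F :: "nat \<Rightarrow> nat \<Rightarrow> nat \<Rightarrow> 'k::comm_ring_1 PR" where
  "F p q n = (\<Sum>j\<in>{0..n}. Poly_Mapping.single (snd (polymono (n - j) (q * p ^ j)), snd (polymono j q)) 1)"

lemma comul_x:
  assumes "CHAR('k::comm_ring_1) = p" "prime p"
  shows "comul p (bvec (polymono (Suc n) (p ^ k)) :: 'k elt) = emb (F p (p ^ k) (Suc n))"
proof -
  have o: "of_nat p = (0::'k)" using assms(1) by auto
  have "comul_mono p (polymono (Suc n) (p ^ k)) = tmul p tone (tmul p (tpow p (comul_gen p (Suc n)) (p ^ k)) tone :: 'k tens)"
    by (rule comul_mono_poly) (use assms(2) prime_gt_0_nat in auto)
  also have "\<dots> = emb (1 * (G p (Suc n) ^ p ^ k * 1))"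
    by (simp only: comul_gen_emb emb_tpow[OF o assms(2)] emb_one[symmetric] emb_mult[OF o assms(2), symmetric])
  also have "\<dots> = emb (F p (p ^ k) (Suc n))"
    by (simp add: G_pow[OF assms] F_def)
  finally show ?thesis unfolding comul_bvec .
qed

lemma emb_F_eval:
  "emb (F p q N) (m1, m2) = (if fst m1 = {} \<and> fst m2 = {} then
      (\<Sum>j\<in>{0..N}. if snd m1 = snd (polymono (N - j) (q * p ^ j)) \<and> snd m2 = snd (polymono j q) then 1 else 0) else 0)"
proof -
  obtain a r b s' where m: "m1 = (a, r)" "m2 = (b, s')" by (cases m1, cases m2) auto
  show ?thesis unfolding m
    by (cases "a = {}"; cases "b = {}") (simp_all add: F_def emb_sum emb_single tvec_def)
qed

lemma snd_polymono_1:
  assumes "q > 0"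
  shows "snd (polymono 1 q) = snd (polymono m e) \<longleftrightarrow> m = 1 \<and> e = q"
proof
  assume "snd (polymono 1 q) = snd (polymono m e)"
  hence "snd (polymono 1 q) 1 = snd (polymono m e) 1" by simp
  thus "m = 1 \<and> e = q" using assms by (auto simp: polymono_def split: if_splits)
qed auto

lemma fst_polymono [simp]: "fst (polymono m e) = {}"
  by (simp add: polymono_def)

lemma polymono_eq: "y = polymono m e \<longleftrightarrow> fst y = {} \<and> snd y = snd (polymono m e)"
  by (cases y) (auto simp: polymono_def)

lemma emb_F_at_a:
  assumes "q > 0" "fst y = {}"
  shows "emb (F p q (Suc n) :: 'k::comm_ring_1 PR) (y, polymono 1 q) = (if snd y = snd (polymono n (q * p)) then 1 else 0)"
proof -
  have "emb (F p q (Suc n) :: 'k PR) (y, polymono 1 q) = (\<Sum>j\<in>{0..Suc n}. if snd y = snd (polymono (Suc n - j) (q * p ^ j)) \<and> snd (polymono 1 q) = snd (polymono j q) then 1 else 0)"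
    using assms(2) by (simp only: emb_F_eval fst_polymono simp_thms if_True)
  also have "\<dots> = (\<Sum>j\<in>{0..Suc n}. if j = 1 then (if snd y = snd (polymono n (q * p)) then 1 else (0::'k)) else 0)"
  proof (rule sum.cong[OF refl])
    fix j assume "j \<in> {0..Suc n}"
    show "(if snd y = snd (polymono (Suc n - j) (q * p ^ j)) \<and> snd (polymono 1 q) = snd (polymono j q) then 1 else 0)
         = (if j = 1 then (if snd y = snd (polymono n (q * p)) then 1 else (0::'k)) else 0)"
      unfolding snd_polymono_1[OF assms(1)] by (cases "j = 1") auto
  qed
  also have "\<dots> = (if snd y = snd (polymono n (q * p)) then 1 else 0)"
    by (subst sum.delta) auto
  finally show ?thesis .
qed

lemma slice_poly:
  assumes "of_nat p = (0::'k::comm_ring_1)" "prime p" "n \<ge> 1" "q > 0"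
  shows "(\<lambda>y. tswap p (emb (F p q (Suc n) :: 'k PR)) (polymono 1 q, y) - emb (F p q (Suc n)) (polymono 1 q, y))
       = bvec (polymono n (q * p))"
proof (rule ext)
  fix y :: mono
  have p2: "p \<ge> 2" using assms(2) prime_ge_2_nat by blast
  have A: "emb (F p q (Suc n) :: 'k PR) (polymono 1 q, y) = 0"
  proof -
    have "(if snd (polymono 1 q) = snd (polymono (Suc n - j) (q * p ^ j)) \<and> snd y = snd (polymono j q) then 1 else 0) = (0::'k)"
      if "j \<in> {0..Suc n}" for j
    proof -
      have "\<not> (Suc n - j = 1 \<and> q * p ^ j = q)"
      proof
        assume h: "Suc n - j = 1 \<and> q * p ^ j = q"
        hence "j = n" using that by auto
        hence "p ^ n = 1" using h assms(4) by simp
        moreover have "p ^ n > 1" using p2 assms(3) by (intro one_less_power) auto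
        ultimately show False by linarith
      qed
      thus ?thesis using snd_polymono_1[OF assms(4)] by auto
    qed
    thus ?thesis by (simp add: emb_F_eval)
  qed
  have B: "tswap p (emb (F p q (Suc n) :: 'k PR)) (polymono 1 q, y) = bvec (polymono n (q * p)) y"
  proof (cases "fst y = {}")
    case False
    hence "y \<noteq> polymono n (q * p)" by (auto simp: polymono_def)
    thus ?thesis using False by (simp add: tswap_def emb_F_eval bvec_def)
  next
    case True
    have y: "y = ({}, snd y)" using True by (cases y) auto
    have s: "(- 1 :: 'k) ^ (mdeg p (polymono 1 q) * mdeg p y) = 1"
      by (subst polymono_fst, subst y) (rule sign_empty[OF assms(1,2)])
    have e: "y = polymono n (q * p) \<longleftrightarrow> snd y = snd (polymono n (q * p))"
      using True by (cases y) (auto simp: polymono_def)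
    have "emb (F p q (Suc n) :: 'k PR) (y, polymono 1 q) = bvec (polymono n (q * p)) y"
      unfolding emb_F_at_a[OF assms(4) True] bvec_def e ..
    thus ?thesis unfolding tswap_def prod.case s by simp
  qed
  show "tswap p (emb (F p q (Suc n) :: 'k PR)) (polymono 1 q, y) - emb (F p q (Suc n)) (polymono 1 q, y)
       = bvec (polymono n (q * p)) y" using A B by simp
qed

lemma supp_tone: "supp (tone :: 'k::zero_neq_one tens) = {(unitmono, unitmono)}"
  by (auto simp: supp_def tone_def tvec_def)

lemma mres_unit: "mres a unitmono = a"
  by (cases a) (simp add: mres_def unitmono_def)

lemma msign_unit: "msign a unitmono = 1"
  by (simp add: msign_def unitmono_def)

lemma mdeg_unit: "mdeg p unitmono = 0"
  by (simp add: mdeg_def unitmono_def)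

lemma tmul_tone_right:
  assumes "finite (supp t)"
  shows "tmul p (t :: 'k::comm_ring_1 tens) tone = t"
proof (rule ext, clarify)
  fix c1 c2 :: mono
  have inj: "inj_on (\<lambda>a. (a, (unitmono, unitmono))) (supp t)" by (auto simp: inj_on_def)
  have S: "supp t \<times> supp (tone :: 'k tens) = (\<lambda>a. (a, (unitmono, unitmono))) ` supp t"
    by (auto simp: supp_tone)
  have "tmul p t tone (c1, c2) = (\<Sum>a\<in>supp t. if a = (c1, c2) then t a else 0)"
    unfolding tmul_def S
    by (simp add: sum.reindex[OF inj] mres_unit msign_unit mdeg_unit tone_def tvec_def split_def
        del: split_paired_all cong: if_cong) (auto intro!: sum.cong)
  also have "\<dots> = t (c1, c2)"
    using assms by (simp add: supp_def)
  finally show "tmul p t tone (c1, c2) = t (c1, c2)" .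
qed

lemma finite_supp_comul_tau: "finite (supp (comul_tau p n :: 'k::comm_ring_1 tens))"
proof (rule finite_subset)
  show "supp (comul_tau p n :: 'k tens) \<subseteq> insert (taumono n, unitmono) ((\<lambda>k. (polymono (n - k) (p ^ k), taumono k)) ` {0..n})"
  proof
    fix x assume "x \<in> supp (comul_tau p n :: 'k tens)"
    hence "comul_tau p n x \<noteq> (0::'k)" by (simp add: supp_def)
    thus "x \<in> insert (taumono n, unitmono) ((\<lambda>k. (polymono (n - k) (p ^ k), taumono k)) ` {0..n})"
      by (auto simp: comul_tau_def tvec_def split: if_splits elim!: sum.not_neutral_contains_not_neutral)
  qed
qed auto

lemma comul_tau1: "comul p (bvec (taumono 1) :: 'k::comm_ring_1 elt) = comul_tau p 1"
proof -
  have "comul_mono p (taumono 1) = tmul p (tmul p (comul_tau p 1) tone) (tone :: 'k tens)"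
    by (simp add: comul_mono_def taumono_def)
  also have "\<dots> = comul_tau p 1" by (simp add: tmul_tone_right finite_supp_comul_tau)
  finally show ?thesis by (simp add: comul_bvec)
qed

lemma slice_tau:
  "(\<lambda>y. tswap p (comul_tau p 1 :: 'k::comm_ring_1 tens) (polymono 1 1, y) - comul_tau p 1 (polymono 1 1, y))
     = (\<lambda>y. - bvec (taumono 0) y)"
proof (rule ext)
  fix y :: mono
  have d: "polymono 1 1 \<noteq> taumono m" "polymono 1 1 \<noteq> unitmono" "polymono 1 1 \<noteq> polymono 0 e" for m e
    by (auto simp: polymono_def taumono_def unitmono_def fun_eq_iff)
  have s: "{0..1::nat} = {0, 1}" by auto
  have tt: "taumono a = taumono b \<longleftrightarrow> a = b" for a b by (simp add: taumono_def)
  have t1: "comul_tau p 1 (polymono 1 1, y) = (bvec (taumono 0) y :: 'k)"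
    unfolding comul_tau_def tvec_def bvec_def s using d
    by (simp add: tt del: One_nat_def)
  have t2: "comul_tau p 1 (y, polymono 1 1) = (0 :: 'k)"
    unfolding comul_tau_def tvec_def s using d
    by (simp add: tt d[symmetric] del: One_nat_def)
  show "tswap p (comul_tau p 1 :: 'k tens) (polymono 1 1, y) - comul_tau p 1 (polymono 1 1, y) = - bvec (taumono 0) y"
    unfolding tswap_def prod.case t1 t2 by simp
qed

lemma valid_mono_mres:
  assumes "valid_mono p a" "valid_mono p b"
  shows "valid_mono p (mres a b)"
proof -
  have "{i. snd a i + snd b i \<noteq> 0} \<subseteq> {i. snd a i \<noteq> 0} \<union> {i. snd b i \<noteq> 0}" by auto
  hence "finite {i. snd a i + snd b i \<noteq> 0}"
    using assms by (auto simp: valid_mono_def intro: finite_subset)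
  thus ?thesis using assms by (simp add: valid_mono_def mres_def)
qed

lemma inAk_mres:
  assumes "inAk_mono p k a" "inAk_mono p k b"
  shows "inAk_mono p k (mres a b)"
  using assms by (auto simp: inAk_mono_def mres_def split: if_splits)

lemma supp_mul_subset: "supp (mul b x) \<subseteq> (\<lambda>(a, c). mres a c) ` (supp b \<times> supp x)"
proof
  fix c assume "c \<in> supp (mul b x)"
  hence "mul b x c \<noteq> 0" by (simp add: supp_def)
  then obtain a c' where "(a, c') \<in> supp b \<times> supp x" "mres a c' = c"
    unfolding mul_def by (auto elim!: sum.not_neutral_contains_not_neutral split: if_splits)
  thus "c \<in> (\<lambda>(a, c). mres a c) ` (supp b \<times> supp x)" by force
qed

lemma mul_Ak:
  assumes "b \<in> Ak p k" "x \<in> Ak p k"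
  shows "mul b x \<in> Ak p k"
proof -
  have fin: "finite (supp b)" "finite (supp x)" using assms by (auto simp: Ak_def valid_elt_def)
  have "finite (supp (mul b x))"
    using supp_mul_subset[of b x] fin by (meson finite_SigmaI finite_imageI finite_subset)
  moreover have "valid_mono p c \<and> inAk_mono p k c" if "mul b x c \<noteq> 0" for c
  proof -
    have "c \<in> supp (mul b x)" using that by (simp add: supp_def)
    then obtain a c' where "a \<in> supp b" "c' \<in> supp x" "c = mres a c'"
      using supp_mul_subset[of b x] by auto
    moreover have "\<forall>m. b m \<noteq> 0 \<longrightarrow> valid_mono p m \<and> inAk_mono p k m"
      "\<forall>m. x m \<noteq> 0 \<longrightarrow> valid_mono p m \<and> inAk_mono p k m"
      using assms unfolding Ak_def valid_elt_def by blast+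
    ultimately show ?thesis unfolding supp_def
      by (blast intro: valid_mono_mres inAk_mres)
  qed
  ultimately show ?thesis by (simp add: Ak_def valid_elt_def)
qed

definition dvdm :: "mono \<Rightarrow> mono \<Rightarrow> bool" where
  "dvdm m a \<longleftrightarrow> fst m \<subseteq> fst a \<and> (\<forall>i. snd m i \<le> snd a i)"

definition J0 :: "nat \<Rightarrow> nat \<Rightarrow> mono \<Rightarrow> 'k::comm_ring_1 elt set" where
  "J0 p k a0 = {f. f \<in> Ak p k \<and> (\<forall>m. f m \<noteq> 0 \<longrightarrow> \<not> dvdm m a0)}"

lemma dvdm_mres: "dvdm (mres a c) a0 \<Longrightarrow> dvdm c a0"
  by (auto simp: dvdm_def mres_def) (metis add_leE)

lemma J0_sub_ideal: "sub_ideal (Ak p k) (J0 p k a0 :: 'k::comm_ring_1 elt set)"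
  unfolding sub_ideal_def
proof (intro conjI ballI allI impI)
  show "J0 p k a0 \<subseteq> Ak p k" by (auto simp: J0_def)
  show "(\<lambda>_. 0) \<in> (J0 p k a0 :: 'k elt set)"
    by (simp add: J0_def Ak_def valid_elt_def supp_def)
next
  fix x y :: "'k elt" assume "x \<in> J0 p k a0" "y \<in> J0 p k a0"
  moreover have "supp (\<lambda>m. x m + y m) \<subseteq> supp x \<union> supp y" by (auto simp: supp_def)
  moreover have "finite (supp x)" "finite (supp y)"
    "\<forall>m. x m \<noteq> 0 \<longrightarrow> valid_mono p m \<and> inAk_mono p k m \<and> \<not> dvdm m a0"
    "\<forall>m. y m \<noteq> 0 \<longrightarrow> valid_mono p m \<and> inAk_mono p k m \<and> \<not> dvdm m a0"
    using calculation unfolding J0_def Ak_def valid_elt_def by blast+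
  ultimately show "(\<lambda>m. x m + y m) \<in> J0 p k a0"
    unfolding J0_def Ak_def valid_elt_def mem_Collect_eq
    by (intro conjI allI impI; (metis add.left_neutral add.right_neutral finite_subset finite_UnI)?)
next
  fix c :: 'k and x :: "'k elt" assume "x \<in> J0 p k a0"
  moreover have "supp (\<lambda>m. c * x m) \<subseteq> supp x" by (auto simp: supp_def)
  moreover have "finite (supp x)"
    "\<forall>m. x m \<noteq> 0 \<longrightarrow> valid_mono p m \<and> inAk_mono p k m \<and> \<not> dvdm m a0"
    using calculation unfolding J0_def Ak_def valid_elt_def by blast+
  ultimately show "(\<lambda>m. c * x m) \<in> J0 p k a0"
    unfolding J0_def Ak_def valid_elt_def mem_Collect_eq
    by (intro conjI allI impI; (metis mult_zero_right finite_subset)?)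
next
  fix b x :: "'k elt" assume b: "b \<in> Ak p k" and x: "x \<in> J0 p k a0"
  have "mul b x \<in> Ak p k" using b x by (auto simp: J0_def intro: mul_Ak)
  moreover have "mul b x m = 0" if "dvdm m a0" for m
    unfolding mul_def
  proof (rule sum.neutral, clarify)
    fix a c assume "a \<in> supp b" "c \<in> supp x"
    show "(if mres a c = m then msign a c * b a * x c else 0) = 0"
    proof (cases "mres a c = m")
      case True
      hence "dvdm c a0" using that dvdm_mres by blast
      hence "x c = 0" using x unfolding J0_def by blast
      thus ?thesis by simp
    qed simp
  qed
  ultimately show "mul b x \<in> J0 p k a0" by (auto simp: J0_def)
qed

lemma Ipk_J0:
  assumes "Igens p k \<subseteq> (J0 p k a0 :: 'k::comm_ring_1 elt set)"
  shows "Ipk p k \<subseteq> (J0 p k a0 :: 'k elt set)"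
  unfolding Ipk_def using J0_sub_ideal assms by blast

lemma slice_ideal:
  assumes I: "sub_ideal B I" and van: "\<forall>f\<in>I. f a = 0" and t: "t \<in> tens_ideal B I"
  shows "(\<lambda>y. t (a, y)) \<in> (I :: 'k::comm_ring_1 elt set)"
proof -
  obtain xs where xs: "set xs \<subseteq> (I \<times> B) \<union> (B \<times> I)" and tx: "t = (\<lambda>x. \<Sum>(u, v)\<leftarrow>xs. tensor u v x)"
    using t by (auto simp: tens_ideal_def)
  have cl: "(\<lambda>_. 0) \<in> I" "\<And>x y. x \<in> I \<Longrightarrow> y \<in> I \<Longrightarrow> (\<lambda>m. x m + y m) \<in> I"
     "\<And>c x. x \<in> I \<Longrightarrow> (\<lambda>m. c * x m) \<in> I"
    using I by (auto simp: sub_ideal_def)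
  have "set xs \<subseteq> (I \<times> B) \<union> (B \<times> I) \<Longrightarrow> (\<lambda>y. \<Sum>(u, v)\<leftarrow>xs. tensor u v (a, y)) \<in> I"
  proof (induction xs)
    case Nil thus ?case using cl by simp
  next
    case (Cons uv xs)
    obtain u v where uv: "uv = (u, v)" by (cases uv)
    have r: "(\<lambda>y. \<Sum>(u, v)\<leftarrow>xs. tensor u v (a, y)) \<in> I" using Cons by simp
    have "u \<in> I \<or> v \<in> I" using Cons.prems uv by auto
    thus ?case
    proof
      assume "u \<in> I"
      hence "u a = 0" using van by blast
      thus ?thesis using r uv by (simp add: tensor_def)
    next
      assume "v \<in> I"
      hence "(\<lambda>y. u a * v y) \<in> I" using cl(3) by blast
      from cl(2)[OF this r] show ?thesis using uv by (simp add: tensor_def)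
    qed
  qed
  thus ?thesis using xs tx by simp
qed

lemma bvec_Ak:
  assumes "valid_mono p m" "inAk_mono p k m"
  shows "(bvec m :: 'k::comm_ring_1 elt) \<in> Ak p k"
proof -
  have "finite (supp (bvec m :: 'k elt))" by (simp add: supp_bvec)
  thus ?thesis using assms by (simp add: Ak_def valid_elt_def bvec_def)
qed

lemma valid_polymono: "valid_mono p (polymono n e)"
proof -
  have "{i. snd (polymono n e) i \<noteq> 0} \<subseteq> {n}" by (auto simp: polymono_def split: if_splits)
  hence "finite {i. snd (polymono n e) i \<noteq> 0}" by (rule finite_subset) simp
  thus ?thesis by (simp add: valid_mono_def polymono_def)
qed

lemma inAk_polymono:
  assumes "p ^ k dvd e"
  shows "inAk_mono p k (polymono n e)"
  using assms by (auto simp: inAk_mono_def polymono_def)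

lemma polymono_not_dvdm:
  assumes "prime p" "n \<ge> 1"
  shows "\<not> dvdm (polymono n (p ^ Suc k)) (polymono 1 (p ^ k))"
proof
  assume "dvdm (polymono n (p ^ Suc k)) (polymono 1 (p ^ k))"
  hence "snd (polymono n (p ^ Suc k)) n \<le> snd (polymono 1 (p ^ k)) n" by (simp add: dvdm_def)
  hence "p ^ Suc k \<le> (if n = 1 then p ^ k else 0)" using assms(2) by (simp add: polymono_def)
  moreover have "p ^ k < p ^ Suc k" using prime_gt_1_nat[OF assms(1)] by simp
  moreover have "0 < p ^ Suc k" using prime_gt_0_nat[OF assms(1)] by simp
  ultimately show False by (simp split: if_splits)
qed

lemma Igens_J0:
  assumes "prime p"
  shows "Igens p k \<subseteq> (J0 p k (polymono 1 (p ^ k)) :: 'k::comm_ring_1 elt set)"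
proof
  fix g :: "'k elt" assume g: "g \<in> Igens p k"
  have poly: "bvec (polymono n (p ^ Suc k)) \<in> (J0 p k (polymono 1 (p ^ k)) :: 'k elt set)" if "n \<ge> 1" for n
  proof -
    have "p ^ k dvd p ^ Suc k" by (simp add: le_imp_power_dvd)
    hence "(bvec (polymono n (p ^ Suc k)) :: 'k elt) \<in> Ak p k"
      using bvec_Ak[OF valid_polymono inAk_polymono] by blast
    thus ?thesis using polymono_not_dvdm[OF assms that, of k] by (auto simp: J0_def bvec_def)
  qed
  have tau: "bvec (taumono 0) \<in> (J0 p k (polymono 1 (p ^ k)) :: 'k elt set)" if "p \<noteq> 2" "k = 0"
  proof -
    have "valid_mono p (taumono 0)" using that by (simp add: valid_mono_def taumono_def)
    moreover have "inAk_mono p k (taumono 0)" using that by (simp add: inAk_mono_def)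
    moreover have "\<not> dvdm (taumono 0) (polymono 1 (p ^ k))" by (simp add: dvdm_def taumono_def polymono_def)
    ultimately have "(bvec (taumono 0) :: 'k elt) \<in> Ak p k" "\<not> dvdm (taumono 0) (polymono 1 (p ^ k))"
      using bvec_Ak by blast+
    thus ?thesis by (auto simp: J0_def bvec_def)
  qed
  show "g \<in> J0 p k (polymono 1 (p ^ k))"
    using g poly tau by (auto simp: Igens_def split: if_splits)
qed

theorem proposition4p7:
  fixes p k :: nat and I :: "('k::{field,finite}) elt set"
  assumes "prime p" and "card (UNIV :: 'k set) = p"
    and "hopf_ideal p (Ak p k) I"
    and "I \<subseteq> Ipk p k"
    and "quot_cocomm p (Ak p k) I"
  shows "I = Ipk p k"
proof -
  have CH: "CHAR('k) = p" by (rule char_k) (use assms in auto)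
  have o: "of_nat p = (0::'k)" using CH by (metis of_nat_CHAR)
  have sI: "sub_ideal (Ak p k) I" using assms(3) by (simp add: hopf_ideal_def)
  define a0 where "a0 = polymono 1 (p ^ k)"
  have IJ: "I \<subseteq> J0 p k a0"
    using assms(4) Ipk_J0[OF Igens_J0[OF assms(1)]] unfolding a0_def by blast
  have van: "\<forall>f\<in>I. f a0 = 0"
  proof
    fix f assume "f \<in> I"
    hence "f \<in> J0 p k a0" using IJ by blast
    moreover have "dvdm a0 a0" by (simp add: dvdm_def)
    ultimately show "f a0 = 0" unfolding J0_def by blast
  qed
  have slice: "(\<lambda>y. tswap p (comul p x) (a0, y) - comul p x (a0, y)) \<in> I" if "x \<in> Ak p k" for x
  proof -
    have "(\<lambda>y. tswap p (comul p x) y - comul p x y) \<in> tens_ideal (Ak p k) I"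
      using assms(5) that by (simp add: quot_cocomm_def)
    from slice_ideal[OF sI van this] show ?thesis by simp
  qed
  have gen: "bvec (polymono n (p ^ Suc k)) \<in> I" if "n \<ge> 1" for n
  proof -
    have pos: "p ^ k > 0" using prime_gt_0_nat[OF assms(1)] by simp
    have "p ^ k dvd p ^ k" by simp
    hence "(bvec (polymono (Suc n) (p ^ k)) :: 'k elt) \<in> Ak p k"
      using bvec_Ak[OF valid_polymono inAk_polymono] by blast
    from slice[OF this] have "(\<lambda>y. tswap p (emb (F p (p ^ k) (Suc n) :: 'k PR)) (polymono 1 (p ^ k), y)
        - emb (F p (p ^ k) (Suc n)) (polymono 1 (p ^ k), y)) \<in> I"
      unfolding comul_x[OF CH assms(1)] a0_def .
    hence "bvec (polymono n (p ^ k * p)) \<in> I"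
      unfolding slice_poly[OF o assms(1) that pos] .
    thus ?thesis by (simp add: mult.commute)
  qed
  have tau: "bvec (taumono 0) \<in> I" if "p \<noteq> 2" "k = 0"
  proof -
    have "valid_mono p (taumono 1)" using that by (simp add: valid_mono_def taumono_def)
    moreover have "inAk_mono p k (taumono 1)" using that by (simp add: inAk_mono_def)
    ultimately have "(bvec (taumono 1) :: 'k elt) \<in> Ak p k" by (rule bvec_Ak)
    from slice[OF this] have "(\<lambda>y. tswap p (comul_tau p 1 :: 'k tens) (polymono 1 1, y) - comul_tau p 1 (polymono 1 1, y)) \<in> I"
      unfolding comul_tau1 a0_def using that by simp
    hence "(\<lambda>y. - bvec (taumono 0) y) \<in> I" unfolding slice_tau .
    hence "(\<lambda>m. (-1) * (- bvec (taumono 0) m)) \<in> I" using sI unfolding sub_ideal_def by blast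
    thus ?thesis by simp
  qed
  have "Igens p k \<subseteq> I"
    using gen tau by (auto simp: Igens_def)
  hence "Ipk p k \<subseteq> I" unfolding Ipk_def using sI by blast
  with assms(4) show ?thesis by blast
qed

end
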